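(* Let $s$ be a nonzero integer such that $s^2+2$ is squarefree. Then $$\epsilon=s^2+1+|s|\sqrt{s^2+2}$$ is the fundamental unit of the ring of integers of $\mathbb{Q}(\sqrt{s^2+2})$. If moreover $|s|\ge 3$ and $3s^2-4s+4$ is a perfect square, and $r_1,r_3$ are the roots of $F_s(t)= t^4 + (4s^3 - 4s^2 + 8s - 4)t^3 + (-6s^2 - 6)t^2 + 4t + 1$ characterized by $r_1=-4s^3+4s^2-8s+4-\tfrac32 s^{-1}-\tfrac32 s^{-2}+\theta_1 s^{-4}$ with $1\le\theta_1\le2$ and $r_3=\tfrac12 s^{-1}+\tfrac12 s^{-2}-\theta_3 s^{-4}$ with $0\le\theta_3\le1$, then $\epsilon=-r_1r_3$. *)

theory Defs
  imports "HOL-Computational_Algebra.Computational_Algebra"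
begin

text \<open>The real quadratic field Q(sqrt d), realised inside the reals via the
  embedding sending sqrt d to the positive real square root.\<close>
definition quad_field :: "int \<Rightarrow> real set" where
  "quad_field d = {of_rat a + of_rat b * sqrt (of_int d) | a b. True}"

definition quad_ring_of_integers :: "int \<Rightarrow> real set" where
  "quad_ring_of_integers d = {x \<in> quad_field d. algebraic_int x}"

definition quad_units :: "int \<Rightarrow> real set" where
  "quad_units d = {x \<in> quad_ring_of_integers d. x \<noteq> 0 \<and> inverse x \<in> quad_ring_of_integers d}"

definition fundamental_unit :: "int \<Rightarrow> real \<Rightarrow> bool" where
  "fundamental_unit d eps \<longleftrightarrow> eps \<in> quad_units d \<and> eps > 1 \<and>
     (\<forall>u \<in> quad_units d. \<exists>n::int. u = eps powi n \<or> u = - (eps powi n))"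

definition F_poly :: "int \<Rightarrow> real \<Rightarrow> real" where
  "F_poly s t = t^4 + (4*s^3 - 4*s^2 + 8*s - 4) * t^3 + (-6*s^2 - 6) * t^2 + 4*t + 1"

end

theory Submission
  imports Defs
begin


lemma sqrt_not_rat:
  fixes d :: int assumes sf: "squarefree d" and d2: "d \<ge> 2"
  shows "sqrt (real_of_int d) \<notin> \<rat>"
proof
  assume r: "sqrt (real_of_int d) \<in> \<rat>"
  have "algebraic_int (sqrt (real_of_int d))" by (intro algebraic_int_sqrt) simp
  with r have "sqrt (real_of_int d) \<in> \<int>" using rational_algebraic_int_is_int by blast
  then obtain k where k: "sqrt (real_of_int d) = of_int k" by (auto elim: Ints_cases)
  have "real_of_int d = (sqrt (real_of_int d))^2" using d2 by simp
  also have "\<dots> = of_int (k*k)" using k by (simp add: power2_eq_square)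
  finally have dk: "d = k*k" by linarith
  hence "is_unit k" using sf unfolding squarefree_def by (auto simp: power2_eq_square)
  hence "k*k = 1" by (auto simp: zdvd1_eq abs_if split: if_splits)
  with dk d2 show False by simp
qed

lemma lin_indep:
  fixes p q :: real
  assumes irr: "sqrt (real_of_int d) \<notin> \<rat>" and "p \<in> \<rat>" "q \<in> \<rat>"
    and eq: "p + q * sqrt (real_of_int d) = 0"
  shows "p = 0 \<and> q = 0"
proof (cases "q = 0")
  case True with eq show ?thesis by simp
next
  case False
  hence "sqrt (real_of_int d) = - p / q" using eq by (simp add: field_simps)
  hence "sqrt (real_of_int d) \<in> \<rat>" using assms by simp
  with irr show ?thesis by simp
qed

lemma map_poly_of_rat_add:
  "map_poly (of_rat :: rat \<Rightarrow> real) (p + q) = map_poly of_rat p + map_poly of_rat q"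
  by (rule poly_eqI) (simp add: coeff_map_poly of_rat_add)

lemma map_poly_of_rat_mult:
  "map_poly (of_rat :: rat \<Rightarrow> real) (p * q) = map_poly of_rat p * map_poly of_rat q"
  by (rule poly_eqI) (simp add: coeff_map_poly coeff_mult of_rat_sum of_rat_mult)

lemma map_poly_of_int_mult:
  "map_poly (of_int :: int \<Rightarrow> rat) (p * q) = map_poly of_int p * map_poly of_int q"
  by (rule poly_eqI) (simp add: coeff_map_poly coeff_mult)

lemma denom_exists:
  fixes R :: "rat poly"
  shows "\<exists>E::int. E > 0 \<and> (\<forall>i. of_int E * coeff R i \<in> \<int>)"
proof (induction R)
  case 0
  show ?case by (intro exI[of _ 1]) auto
next
  case (pCons c R)
  then obtain E where E: "E > 0" "\<forall>i. of_int E * coeff R i \<in> \<int>" by blast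
  obtain a b where ab: "quotient_of c = (a, b)" by force
  have b: "b > 0" using quotient_of_denom_pos[OF ab] .
  have c: "c = of_int a / of_int b" using quotient_of_div[OF ab] .
  show ?case
  proof (intro exI[of _ "E*b"] conjI allI)
    show "E * b > 0" using E b by simp
    fix i show "of_int (E*b) * coeff (pCons c R) i \<in> \<int>"
    proof (cases i)
      case 0
      have bc: "of_int b * c = (of_int a :: rat)" using b by (simp add: c)
      have "of_int (E*b) * coeff (pCons c R) i = (of_int (E*a) :: rat)" using 0 by (simp add: bc mult.assoc)
      thus ?thesis by (metis Ints_of_int)
    next
      case (Suc j)
      have "of_int (E*b) * coeff R j = of_int b * (of_int E * coeff R j)" by simp
      also have "\<dots> \<in> \<int>" using E(2) Ints_mult Ints_of_int by blast
      finally show ?thesis using Suc by simp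
    qed
  qed
qed

lemma of_int_floor_Ints: "(x::rat) \<in> \<int> \<Longrightarrow> of_int \<lfloor>x\<rfloor> = x"
  by (auto elim: Ints_cases)

lemma gauss_quad:
  fixes P :: "int poly" and n t :: rat and R :: "rat poly"
  assumes lc: "lead_coeff P = 1" and eq: "map_poly of_int P = [:n, t, 1:] * R"
  shows "n \<in> \<int> \<and> t \<in> \<int>"
proof -
  define m where "m = [:n, t, 1:]"
  obtain D where D: "D > 0" "\<forall>i. of_int D * coeff m i \<in> \<int>" using denom_exists by blast
  obtain E where E: "E > 0" "\<forall>i. of_int E * coeff R i \<in> \<int>" using denom_exists by blast
  define M :: "int poly" where "M = map_poly (\<lambda>c. \<lfloor>of_int D * c\<rfloor>) m"
  define N :: "int poly" where "N = map_poly (\<lambda>c. \<lfloor>of_int E * c\<rfloor>) R"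
  have cM: "coeff M i = \<lfloor>of_int D * coeff m i\<rfloor>" for i
    unfolding M_def by (simp add: coeff_map_poly)
  have cN: "coeff N i = \<lfloor>of_int E * coeff R i\<rfloor>" for i
    unfolding N_def by (simp add: coeff_map_poly)
  have M: "map_poly of_int M = smult (of_int D) m"
    by (rule poly_eqI) (simp add: coeff_map_poly cM of_int_floor_Ints D(2))
  have N: "map_poly of_int N = smult (of_int E) R"
    by (rule poly_eqI) (simp add: coeff_map_poly cN of_int_floor_Ints E(2))
  have degP: "degree (map_poly (of_int :: int \<Rightarrow> rat) P) = degree P"
    by (rule degree_map_poly) simp
  have "lead_coeff (map_poly (of_int :: int \<Rightarrow> rat) P) = 1"
    using lc by (simp add: degP coeff_map_poly)
  moreover have "lead_coeff (map_poly (of_int :: int \<Rightarrow> rat) P) = lead_coeff [:n,t,1:] * lead_coeff R"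
    by (simp only: eq lead_coeff_mult)
  moreover have "lead_coeff [:n,t,1::rat:] = 1" by simp
  ultimately have lR: "lead_coeff R = 1" by simp
  have sm: "map_poly (of_int::int\<Rightarrow>rat) (smult (D*E) P) = smult (of_int (D*E)) (map_poly of_int P)"
    by (rule poly_eqI) (simp add: coeff_map_poly)
  have "map_poly (of_int :: int \<Rightarrow> rat) (M * N) = smult (of_int D) m * smult (of_int E) R"
    by (simp add: map_poly_of_int_mult M N)
  also have "\<dots> = smult (of_int (D*E)) (m * R)" by (simp add: mult_ac)
  also have "\<dots> = map_poly of_int (smult (D*E) P)" by (simp only: sm eq[folded m_def])
  finally have "map_poly (of_int :: int \<Rightarrow> rat) (M * N) = map_poly of_int (smult (D*E) P)" .
  hence MN: "M * N = smult (D*E) P"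
    by (metis (no_types, lifting) coeff_map_poly of_int_0 of_int_eq_iff poly_eqI)
  have cP: "content P = 1"
  proof -
    have "content P dvd 1" using content_dvd_coeff[of P "degree P"] lc by simp
    moreover have "\<bar>content P\<bar> = content P" using normalize_content[of P] by simp
    ultimately show ?thesis by (simp add: zdvd1_eq)
  qed
  have "content M * content N = D * E"
    using arg_cong[OF MN, of content] D E by (simp add: content_mult cP)
  moreover have "content M dvd D" using content_dvd_coeff[of M 2] by (simp add: cM m_def numeral_2_eq_2)
  moreover have "content N dvd E" using content_dvd_coeff[of N "degree R"] lR by (simp add: cN)
  moreover have "content M \<ge> 0" "content N \<ge> 0"
    by (metis abs_ge_zero normalize_content normalize_int_def)+
  ultimately have cMD: "content M = D"
  proof -
    assume prod: "content M * content N = D * E" and d1: "content M dvd D" and d2: "content N dvd E"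
      and g1: "content M \<ge> 0" and g2: "content N \<ge> 0"
    have l1: "content M \<le> D" using dvd_imp_le_int[OF _ d1] D(1) g1 by simp
    have l2: "content N \<le> E" using dvd_imp_le_int[OF _ d2] E(1) g2 by simp
    show ?thesis
    proof (rule ccontr)
      assume "content M \<noteq> D"
      hence "content M < D" using l1 by simp
      have "content M * content N \<le> content M * E" using l2 g1 by (rule mult_left_mono)
      also have "\<dots> < D * E" using \<open>content M < D\<close> E(1) by (rule mult_strict_right_mono)
      finally show False using prod by simp
    qed
  qed
  have "D dvd coeff M 0" "D dvd coeff M 1" using content_dvd_coeff cMD by metis+
  then obtain k1 k2 where k: "\<lfloor>of_int D * n\<rfloor> = D * k1" "\<lfloor>of_int D * t\<rfloor> = D * k2"
    by (auto simp: cM m_def elim!: dvdE)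
  have "of_int D * n = of_int (D*k1)" using of_int_floor_Ints[of "of_int D * n"] D(2)[rule_format, of 0] k(1)
    by (auto simp: m_def)
  hence "n = of_int k1" using D(1) by simp
  moreover have "of_int D * t = of_int (D*k2)" using of_int_floor_Ints[of "of_int D * t"] D(2)[rule_format, of 1] k(2)
    by (auto simp: m_def)
  hence "t = of_int k2" using D(1) by simp
  ultimately show ?thesis by simp
qed

lemma deg1_poly: assumes "degree (r::'a::comm_ring_1 poly) \<le> 1" shows "r = [:coeff r 0, coeff r 1:]"
proof (rule poly_eqI)
  fix i show "coeff r i = coeff [:coeff r 0, coeff r 1:] i"
  proof (cases i)
    case (Suc j) then show ?thesis using assms by (cases j) (auto simp: coeff_eq_0)
  qed simp
qed

lemma int_of_quad_int:
  fixes d :: int and a b :: rat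
  assumes irr: "sqrt (real_of_int d) \<notin> \<rat>" and d: "d \<ge> 0"
  and ai: "algebraic_int (of_rat a + of_rat b * sqrt (real_of_int d))"
  shows "2*a \<in> \<int> \<and> a^2 - of_int d * b^2 \<in> \<int>"
proof (cases "b = 0")
  case True
  hence "of_rat a \<in> (\<int> :: real set)" using ai rational_algebraic_int_is_int[of "of_rat a :: real"] by (simp add: Rats_of_rat)
  then obtain k where "(of_rat a :: real) = of_int k" by (auto elim: Ints_cases)
  hence "a = of_int k" by (metis of_rat_eq_iff of_rat_of_int_eq)
  thus ?thesis using True by simp
next
  case False
  define w where "w = sqrt (real_of_int d)"
  define x where "x = of_rat a + of_rat b * w"
  have w2: "w^2 = of_int d" using d by (simp add: w_def)
  obtain P where P: "poly (map_poly of_int P) x = 0" "lead_coeff P = 1"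
    using ai algebraic_int_altdef_ipoly unfolding x_def w_def by blast
  define PQ :: "rat poly" where "PQ = map_poly of_int P"
  define m :: "rat poly" where "m = [:a^2 - of_int d * b^2, -2*a, 1:]"
  have m0: "m \<noteq> 0" by (simp add: m_def)
  define R where "R = PQ div m"
  define r where "r = PQ mod m"
  have PQ: "PQ = m * R + r" unfolding R_def r_def by (metis div_mult_mod_eq mult.commute)
  have mx: "poly (map_poly of_rat m) x = 0"
  proof -
    have "poly (map_poly of_rat m) x = (of_rat a)^2 - of_int d * (of_rat b)^2 - 2 * of_rat a * x + x^2"
      by (simp add: m_def map_poly_pCons of_rat_diff of_rat_mult of_rat_minus of_rat_power algebra_simps power2_eq_square)
    also have "\<dots> = 0" unfolding x_def using w2 by (simp add: algebra_simps power2_eq_square)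
    finally show ?thesis .
  qed
  have "map_poly (of_rat :: rat \<Rightarrow> real) PQ = map_poly of_int P"
    unfolding PQ_def by (simp add: map_poly_map_poly o_def)
  hence "poly (map_poly (of_rat :: rat \<Rightarrow> real) PQ) x = 0" using P by simp
  hence rx: "poly (map_poly (of_rat :: rat \<Rightarrow> real) r) x = 0"
    by (simp add: PQ map_poly_of_rat_add map_poly_of_rat_mult mx)
  have r0: "r = 0"
  proof (rule ccontr)
    assume "r \<noteq> 0"
    hence "degree r < degree m" using degree_mod_less[OF m0, of PQ] by (simp add: r_def)
    hence "degree r \<le> 1" by (simp add: m_def)
    hence req: "r = [:coeff r 0, coeff r 1:]" by (rule deg1_poly)
    define c0 where "c0 = coeff r 0"
    define c1 where "c1 = coeff r 1"
    have req': "r = [:c0, c1:]" using req unfolding c0_def c1_def .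
    have "poly (map_poly (of_rat :: rat \<Rightarrow> real) [:c0, c1:]) x = 0" using rx by (simp only: req' [symmetric])
    hence "of_rat c0 + x * of_rat c1 = 0" by (simp add: map_poly_pCons split: if_splits)
    hence "of_rat c0 + of_rat c1 * x = 0" by (metis mult.commute)
    hence "(of_rat (c0 + c1 * a)) + of_rat (c1 * b) * w = 0"
      unfolding x_def by (simp add: of_rat_add of_rat_mult algebra_simps)
    hence "of_rat (c0 + c1 * a) = (0::real) \<and> (of_rat (c1 * b) :: real) = 0"
      using lin_indep[OF irr, of "of_rat (c0 + c1 * a)" "of_rat (c1 * b)"] unfolding w_def
      by (simp only: Rats_of_rat simp_thms)
    hence "c1 = 0" "c0 = 0" using False by auto
    hence "r = 0" using req' by simp
    with \<open>r \<noteq> 0\<close> show False by simp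
  qed
  have "map_poly of_int P = [:a^2 - of_int d * b^2, -2*a, 1:] * R"
    using PQ r0 by (simp add: PQ_def m_def)
  from gauss_quad[OF P(2) this] have "a^2 - of_int d * b^2 \<in> \<int>" "-2*a \<in> \<int>" by auto
  moreover from this(2) have "2*a \<in> \<int>" using Ints_minus by fastforce
  ultimately show ?thesis by simp
qed

lemma sq_mod4: "((x::int)*x) mod 4 = (if even x then 0 else 1)"
proof (cases "even x")
  case True then obtain u where "x = 2*u" by (auto elim: evenE)
  hence "x*x = 4*(u*u)" by simp
  thus ?thesis using True by simp
next
  case False then obtain u where "x = 2*u+1" by (auto elim: oddE)
  hence "x*x = 4*(u*u+u) + 1" by (simp add: algebra_simps)
  moreover have "\<forall>z::int. (4*z+1) mod 4 = 1" by presburger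
  ultimately show ?thesis using False by (simp only: if_False)
qed

lemma mod4_aux:
  fixes T p d :: int
  assumes "4 dvd (T*T - d*(p*p))" and d4: "d mod 4 = 2 \<or> d mod 4 = 3"
  shows "even T \<and> even p"
proof -
  have "(T*T - d*(p*p)) mod 4 = 0" using assms(1) by simp
  hence h: "((T*T) mod 4 - ((d mod 4) * ((p*p) mod 4)) mod 4) mod 4 = 0"
    by (metis mod_diff_eq mod_mult_eq mod_mod_trivial)
  show ?thesis
  proof (cases "even T"; cases "even p")
    assume "even T" "even p" thus ?thesis by simp
  next
    assume "even T" "odd p" thus ?thesis using h d4 by (auto simp: sq_mod4)
  next
    assume "odd T" "even p" thus ?thesis using h d4 by (auto simp: sq_mod4)
  next
    assume "odd T" "odd p" thus ?thesis using h d4 by (auto simp: sq_mod4)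
  qed
qed

lemma quad_int_coeffs:
  fixes d :: int and a b :: rat
  assumes sf: "squarefree d" and d4: "d mod 4 = 2 \<or> d mod 4 = 3"
    and t: "2*a \<in> \<int>" and n: "a^2 - of_int d * b^2 \<in> \<int>"
  shows "a \<in> \<int> \<and> b \<in> \<int>"
proof -
  obtain T where T: "2*a = of_int T" using t by (auto elim: Ints_cases)
  obtain K where K: "a^2 - of_int d * b^2 = of_int K" using n by (auto elim: Ints_cases)
  obtain p q where pq: "quotient_of (2*b) = (p, q)" by force
  have q0: "q > 0" using quotient_of_denom_pos[OF pq] .
  have cop: "coprime p q" using quotient_of_coprime[OF pq] .
  have bq: "2*b = of_int p / of_int q" using quotient_of_div[OF pq] .
  have "of_int d * (2*b)^2 = (2*a)^2 - 4 * (a^2 - of_int d * b^2)" by (simp add: algebra_simps power2_eq_square)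
  also have "\<dots> = (of_int T)^2 - 4 * of_int K" by (simp only: T K)
  finally have "of_int d * (of_int p / of_int q)^2 = (of_int (T*T - 4*K) :: rat)"
    by (simp add: bq power2_eq_square)
  hence "of_int d * of_int p ^ 2 = (of_int ((T*T - 4*K) * q^2) :: rat)"
    using q0 by (simp add: field_simps)
  hence eq: "d * p^2 = (T*T - 4*K) * q^2" by (metis of_int_eq_iff of_int_mult of_int_power)
  hence "q^2 dvd d * p^2" by simp
  moreover have "coprime (q^2) (p^2)" using cop by (simp add: coprime_commute)
  ultimately have "q^2 dvd d" using coprime_dvd_mult_left_iff by blast
  hence "is_unit q" using sf unfolding squarefree_def by blast
  hence q1: "q = 1" using q0 by (simp add: zdvd1_eq)
  hence bp: "2*b = of_int p" using bq by simp
  have "T*T - d*(p*p) = 4*K" using eq q1 by (simp add: power2_eq_square algebra_simps)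
  hence "4 dvd (T*T - d*(p*p))" by simp
  from mod4_aux[OF this d4] obtain u v where "T = 2*u" "p = 2*v" by (auto elim!: evenE)
  hence "a = of_int u" "b = of_int v" using T bp by simp_all
  thus ?thesis by simp
qed



definition nu :: "int \<Rightarrow> real \<Rightarrow> bool" where
  "nu d v \<longleftrightarrow> (\<exists>X Y::int. v = of_int X + of_int Y * sqrt (of_int d) \<and> (X^2 - d*Y^2 = 1 \<or> X^2 - d*Y^2 = -1))"

lemma prod_form:
  fixes w :: real assumes w2: "w*w = of_int d"
  shows "(of_int X1 + of_int Y1 * w) * (of_int X2 + of_int Y2 * w) = of_int (X1*X2 + d*Y1*Y2) + of_int (X1*Y2 + X2*Y1) * w"
proof -
  have "(of_int X1 + of_int Y1 * w) * (of_int X2 + of_int Y2 * w) =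
     of_int X1 * of_int X2 + of_int Y1 * of_int Y2 * (w*w) + (of_int X1 * of_int Y2 + of_int X2 * of_int Y1) * w"
    by (simp add: algebra_simps)
  also have "\<dots> = of_int (X1*X2 + d*Y1*Y2) + of_int (X1*Y2 + X2*Y1) * w" by (simp add: w2)
  finally show ?thesis .
qed

lemma nu_mult:
  assumes d: "d \<ge> 0" and u: "nu d u" and v: "nu d v" shows "nu d (u*v)"
proof -
  define w where "w = sqrt (real_of_int d)"
  have w2: "w*w = of_int d" using d by (simp add: w_def)
  obtain X1 Y1 where 1: "u = of_int X1 + of_int Y1 * w" "X1^2 - d*Y1^2 = 1 \<or> X1^2 - d*Y1^2 = -1"
    using u unfolding nu_def w_def by blast
  obtain X2 Y2 where 2: "v = of_int X2 + of_int Y2 * w" "X2^2 - d*Y2^2 = 1 \<or> X2^2 - d*Y2^2 = -1"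
    using v unfolding nu_def w_def by blast
  have e: "u*v = of_int (X1*X2 + d*Y1*Y2) + of_int (X1*Y2 + X2*Y1) * w"
    unfolding 1(1) 2(1) by (rule prod_form[OF w2])
  have n: "(X1*X2 + d*Y1*Y2)^2 - d*(X1*Y2 + X2*Y1)^2 = (X1^2 - d*Y1^2) * (X2^2 - d*Y2^2)"
    by (simp add: algebra_simps power2_eq_square)
  have "(X1^2 - d*Y1^2) * (X2^2 - d*Y2^2) = 1 \<or> (X1^2 - d*Y1^2) * (X2^2 - d*Y2^2) = -1"
    using 1(2) 2(2) by auto
  thus ?thesis unfolding nu_def w_def[symmetric] using e n by metis
qed

lemma nu_inverse:
  assumes d: "d \<ge> 0" and v: "nu d v" shows "nu d (inverse v)"
proof -
  define w where "w = sqrt (real_of_int d)"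
  have w2: "w*w = of_int d" using d by (simp add: w_def)
  obtain X Y where 1: "v = of_int X + of_int Y * w" "X^2 - d*Y^2 = 1 \<or> X^2 - d*Y^2 = -1"
    using v unfolding nu_def w_def by blast
  define N where "N = X^2 - d*Y^2"
  have N: "N = 1 \<or> N = -1" using 1(2) N_def by simp
  have "v * (of_int X + of_int (-Y) * w) = of_int (X*X + d*Y*(-Y)) + of_int (X*(-Y) + X*Y) * w"
    unfolding 1(1) by (rule prod_form[OF w2])
  also have "\<dots> = of_int N" by (simp add: N_def power2_eq_square)
  finally have vN: "v * (of_int X + of_int (-Y) * w) = of_int N" .
  have "v * (of_int N * (of_int X + of_int (-Y) * w)) = of_int N * of_int N"
    by (simp only: vN mult.left_commute[of v])
  also have "\<dots> = 1" using N by auto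
  finally have "inverse v = of_int N * (of_int X + of_int (-Y) * w)" by (rule inverse_unique)
  hence "inverse v = of_int (N*X) + of_int (-N*Y) * w" by (simp add: algebra_simps)
  moreover have "(N*X)^2 - d*(-N*Y)^2 = N"
  proof -
    have "(N*X)^2 - d*(-N*Y)^2 = N^2 * N" by (simp add: N_def power2_eq_square algebra_simps)
    thus ?thesis using N by auto
  qed
  ultimately show ?thesis unfolding nu_def w_def[symmetric] using N by metis
qed

lemma nu_one: "nu d 1"
  unfolding nu_def by (rule exI[of _ 1], rule exI[of _ 0]) simp

lemma nu_power: assumes "d \<ge> 0" "nu d v" shows "nu d (v ^ n)"
  by (induction n) (auto intro: nu_mult nu_one assms)

lemma nu_powi: assumes "d \<ge> 0" "nu d v" shows "nu d (v powi n)"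
  unfolding power_int_def using assms by (auto intro!: nu_power nu_inverse)

lemma nu_minus: assumes "nu d v" shows "nu d (-v)"
proof -
  obtain X Y where "v = of_int X + of_int Y * sqrt (of_int d)" "X^2 - d*Y^2 = 1 \<or> X^2 - d*Y^2 = -1"
    using assms unfolding nu_def by blast
  thus ?thesis unfolding nu_def by (intro exI[of _ "-X"] exI[of _ "-Y"]) auto
qed

lemma int_between_squares:
  fixes m X :: int assumes "0 \<le> m" "0 < X" "m^2 < X^2" "X^2 < (m+1)^2" shows False
proof -
  have "m < X" using assms power_less_imp_less_base[of m 2 X] by simp
  moreover have "X < m+1" using assms power_less_imp_less_base[of X 2 "m+1"] by simp
  ultimately show False by simp
qed

lemma nu_ge_eps:
  fixes a :: int
  assumes a: "a \<ge> 1" and v: "nu (a^2+2) v" and v1: "v > 1"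
  shows "of_int (a^2+1) + of_int a * sqrt (of_int (a^2+2)) \<le> v"
proof -
  define d where "d = a^2+2"
  define w where "w = sqrt (real_of_int d)"
  have w2: "w*w = of_int d" by (simp add: w_def d_def)
  have w0: "w > 0" unfolding w_def d_def by (simp add: add_nonneg_pos)
  obtain X Y where 1: "v = of_int X + of_int Y * w" "X^2 - d*Y^2 = 1 \<or> X^2 - d*Y^2 = -1"
    using v unfolding nu_def w_def d_def by blast
  define c where "c = of_int X + of_int (-Y) * w"
  define N where "N = X^2 - d*Y^2"
  have N: "N = 1 \<or> N = -1" using 1(2) N_def by simp
  have "v * c = of_int (X*X + d*Y*(-Y)) + of_int (X*(-Y) + X*Y) * w"
    unfolding 1(1) c_def by (rule prod_form[OF w2])
  also have "\<dots> = of_int N" by (simp add: N_def power2_eq_square)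
  finally have vc: "v * c = of_int N" .
  have "\<bar>c\<bar> < 1"
  proof -
    have "\<bar>v\<bar> * \<bar>c\<bar> = 1" using vc N by (auto simp flip: abs_mult)
    hence "v * \<bar>c\<bar> = 1" using v1 by simp
    hence "\<bar>c\<bar> = 1 / v" using v1 by (simp add: field_simps)
    thus ?thesis using v1 by simp
  qed
  have "2 * of_int X = v + c" "2 * (of_int Y * w) = v - c" using 1(1) c_def by auto
  hence "of_int X > (0::real)" "of_int Y * w > 0" using v1 \<open>\<bar>c\<bar> < 1\<close> by auto
  hence X0: "X > 0" and Y0: "Y > 0" using w0 by (auto simp: zero_less_mult_iff)
  have eqX: "X^2 = d*Y^2 + N" using N_def by simp
  show ?thesis
  proof (cases "Y \<ge> a")
    case True
    have "a^2 \<le> Y^2" using True a by (intro power_mono) auto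
    hence "d*a^2 \<le> d*Y^2" using d_def by (intro mult_left_mono) auto
    hence "X^2 \<ge> (a^2+2)*a^2 - 1" using eqX N by (auto simp: d_def)
    moreover have "(a^2+2)*a^2 - 1 = (a^2)^2 + (2*a^2 - 1)" by (simp add: algebra_simps power2_eq_square)
    moreover have "2*a^2 - 1 > 0" using one_le_power[OF a, of 2] by linarith
    ultimately have "X^2 > (a^2)^2" by linarith
    hence "X > a^2" using X0 power_less_imp_less_base[of "a^2" 2 X] by simp
    hence "X \<ge> a^2+1" by simp
    hence "of_int X \<ge> real_of_int (a^2+1)" by linarith
    moreover have "of_int Y * w \<ge> of_int a * w" using True w0 by (intro mult_right_mono) auto
    ultimately show ?thesis unfolding 1(1) w_def d_def by linarith
  next
    case False
    define m where "m = a*Y"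
    have m0: "m \<ge> 0" using a Y0 by (simp add: m_def)
    have "m^2 < X^2"
    proof -
      have "m^2 = a^2*Y^2" by (simp add: m_def power_mult_distrib)
      moreover have "Y^2 \<ge> 1" using Y0 by (simp add: one_le_power)
      ultimately show ?thesis using eqX N by (auto simp: d_def algebra_simps)
    qed
    moreover have "X^2 < (m+1)^2"
    proof -
      have "Y*Y < a*Y" using False Y0 by simp
      have "(m+1)^2 = a^2*Y^2 + 2*(a*Y) + 1" by (simp add: m_def power2_eq_square algebra_simps)
      moreover have "2*Y^2 < 2*(a*Y)" using \<open>Y*Y < a*Y\<close> by (simp add: power2_eq_square)
      ultimately show ?thesis using eqX N by (auto simp: d_def algebra_simps)
    qed
    ultimately show ?thesis using int_between_squares[OF m0 X0] by blast
  qed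
qed

lemma nu_nonzero:
  assumes d: "d \<ge> 0" and v: "nu d v" shows "v \<noteq> 0"
proof
  assume v0: "v = 0"
  define w where "w = sqrt (real_of_int d)"
  have w2: "w*w = of_int d" using d by (simp add: w_def)
  obtain X Y where 1: "v = of_int X + of_int Y * w" "X^2 - d*Y^2 = 1 \<or> X^2 - d*Y^2 = -1"
    using v unfolding nu_def w_def by blast
  have "v * (of_int X + of_int (-Y) * w) = of_int (X*X + d*Y*(-Y)) + of_int (X*(-Y) + X*Y) * w"
    unfolding 1(1) by (rule prod_form[OF w2])
  also have "\<dots> = of_int (X^2 - d*Y^2)" by (simp add: power2_eq_square)
  finally have "v * (of_int X + of_int (-Y) * w) = of_int (X^2 - d*Y^2)" .
  hence "real_of_int (X^2 - d*Y^2) = 0" using v0 by (metis mult_zero_left)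
  hence "X^2 - d*Y^2 = 0" by (simp only: of_int_eq_0_iff)
  thus False using 1(2) by auto
qed

lemma nu_classify:
  fixes a :: int
  assumes a: "a \<ge> 1" and u: "nu (a^2+2) u"
  defines "eps \<equiv> of_int (a^2+1) + of_int a * sqrt (of_int (a^2+2))"
  shows "\<exists>n::int. u = eps powi n \<or> u = - (eps powi n)"
proof -
  have "a^2+1 \<ge> 2" using one_le_power[OF a, of 2] by simp
  hence "real_of_int (a^2+1) \<ge> real_of_int 2" by (simp only: of_int_le_iff)
  moreover have "of_int a * sqrt (of_int (a^2+2)) \<ge> (0::real)" using a by simp
  ultimately have eps1: "eps > 1" unfolding eps_def by linarith
  have nue: "nu (a^2+2) eps" unfolding nu_def eps_def
    by (rule exI[of _ "a^2+1"], rule exI[of _ a]) (simp add: power2_eq_square algebra_simps)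
  have d0: "a^2+2 \<ge> 0" by (simp add: add_nonneg_nonneg)
  define u' where "u' = \<bar>u\<bar>"
  have nuu': "nu (a^2+2) u'" using u nu_minus unfolding u'_def by (cases "u \<ge> 0") auto
  have u'0: "u' > 0" using nu_nonzero[OF d0 u] unfolding u'_def by simp
  define k where "k = \<lfloor>log eps u'\<rfloor>"
  have "eps powr real_of_int k \<le> u' \<and> u' < eps powr real_of_int (k + 1)"
    using floor_log_eq_powr_iff[OF u'0 eps1, of k] k_def by blast
  moreover have "eps powr real_of_int (k+1) = eps powi (k+1)" "eps powr real_of_int k = eps powi k"
    using eps1 by (intro powr_real_of_int'; simp)+
  ultimately have k1: "eps powi k \<le> u'" and k2: "u' < eps powi (k+1)" by simp_all
  have ep0: "eps powi k > 0" using eps1 by simp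
  define v where "v = u' * inverse (eps powi k)"
  have nuv: "nu (a^2+2) v" unfolding v_def
    by (intro nu_mult[OF d0] nuu' nu_inverse nu_powi nue d0)
  have v1: "v \<ge> 1" using k1 ep0 by (simp add: v_def field_simps)
  have "eps powi (k+1) = eps powi k * eps" using eps1 by (simp add: power_int_add_1)
  hence v2: "v < eps" using k2 ep0 by (simp add: v_def field_simps)
  have "v = 1"
  proof (rule ccontr)
    assume "v \<noteq> 1"
    hence "v > 1" using v1 by simp
    from nu_ge_eps[OF a nuv this] v2 show False unfolding eps_def by simp
  qed
  hence "u' = eps powi k" using ep0 by (simp add: v_def field_simps)
  hence "u = eps powi k \<or> u = - (eps powi k)" unfolding u'_def by (cases "u \<ge> 0") auto
  thus ?thesis by blast
qed

lemma roi_rep: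
  fixes d :: int
  assumes sf: "squarefree d" and d4: "d mod 4 = 2 \<or> d mod 4 = 3" and d2: "d \<ge> 2"
    and x: "x \<in> quad_ring_of_integers d"
  shows "\<exists>X Y::int. x = of_int X + of_int Y * sqrt (of_int d)"
proof -
  from x obtain a b where ab: "x = of_rat a + of_rat b * sqrt (of_int d)" and ai: "algebraic_int x"
    unfolding quad_ring_of_integers_def quad_field_def by blast
  have irr: "sqrt (real_of_int d) \<notin> \<rat>" using sqrt_not_rat[OF sf d2] .
  have "2*a \<in> \<int> \<and> a^2 - of_int d * b^2 \<in> \<int>"
    using int_of_quad_int[OF irr _ ai[unfolded ab]] d2 by simp
  hence "a \<in> \<int> \<and> b \<in> \<int>" using quad_int_coeffs[OF sf d4] by blast
  then obtain X Y where "a = of_int X" "b = of_int Y" by (auto elim!: Ints_cases)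
  thus ?thesis using ab by auto
qed

lemma units_nu:
  fixes d :: int
  assumes sf: "squarefree d" and d4: "d mod 4 = 2 \<or> d mod 4 = 3" and d2: "d \<ge> 2"
    and u: "u \<in> quad_units d"
  shows "nu d u"
proof -
  define w where "w = sqrt (real_of_int d)"
  have w2: "w*w = of_int d" using d2 by (simp add: w_def)
  have irr: "w \<notin> \<rat>" using sqrt_not_rat[OF sf d2] unfolding w_def .
  have u0: "u \<noteq> 0" and r1: "u \<in> quad_ring_of_integers d" and r2: "inverse u \<in> quad_ring_of_integers d"
    using u unfolding quad_units_def by auto
  obtain X1 Y1 where 1: "u = of_int X1 + of_int Y1 * w" using roi_rep[OF sf d4 d2 r1] w_def by blast
  obtain X2 Y2 where 2: "inverse u = of_int X2 + of_int Y2 * w" using roi_rep[OF sf d4 d2 r2] w_def by blast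
  have "1 = u * inverse u" using u0 by simp
  also have "\<dots> = of_int (X1*X2 + d*Y1*Y2) + of_int (X1*Y2 + X2*Y1) * w"
    unfolding 2 unfolding 1 by (rule prod_form[OF w2])
  finally have "of_int (X1*X2 + d*Y1*Y2 - 1) + of_int (X1*Y2 + X2*Y1) * w = 0" by simp
  hence "real_of_int (X1*X2 + d*Y1*Y2 - 1) = 0 \<and> real_of_int (X1*Y2 + X2*Y1) = 0"
    using lin_indep[of d "of_int (X1*X2 + d*Y1*Y2 - 1)" "of_int (X1*Y2 + X2*Y1)"] irr unfolding w_def
    by (simp only: Rats_of_int simp_thms)
  hence "X1*X2 + d*Y1*Y2 - 1 = 0 \<and> X1*Y2 + X2*Y1 = 0" by (simp only: of_int_eq_0_iff)
  hence e1: "X1*X2 + d*Y1*Y2 = 1" and e2: "X1*Y2 + X2*Y1 = 0" by simp_all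
  have "(X1*X2 + d*Y1*Y2)^2 - d*(X1*Y2 + X2*Y1)^2 = (X1^2 - d*Y1^2) * (X2^2 - d*Y2^2)"
    by (simp add: algebra_simps power2_eq_square)
  hence "(X1^2 - d*Y1^2) * (X2^2 - d*Y2^2) = 1" using e1 e2 by simp
  hence "X1^2 - d*Y1^2 = 1 \<or> X1^2 - d*Y1^2 = -1" unfolding zmult_eq_1_iff by blast
  thus ?thesis unfolding nu_def using 1 w_def by blast
qed

lemma quad_root_alg_int:
  fixes a :: int and y :: real
  assumes "y^2 - 2 * of_int (a^2+1) * y + 1 = 0"
  shows "algebraic_int y"
proof (rule algebraic_int.intros[of "[:1, -2 * of_int (a^2+1), 1:]"])
  show "lead_coeff [:1, -2 * of_int (a^2+1), 1::real:] = 1" by simp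
  show "\<forall>i. coeff [:1, -2 * of_int (a^2+1), 1::real:] i \<in> \<int>"
  proof
    fix i show "coeff [:1, -2 * of_int (a^2+1), 1::real:] i \<in> \<int>"
      by (auto simp: coeff_pCons split: nat.splits)
  qed
  show "poly [:1, -2 * of_int (a^2+1), 1:] y = 0"
    using assms by (simp add: algebra_simps power2_eq_square)
qed

lemma fund_unit_a:
  fixes a :: int
  assumes a: "a \<ge> 1" and sf: "squarefree (a^2+2)"
  shows "fundamental_unit (a^2+2) (of_int (a^2+1) + of_int a * sqrt (of_int (a^2+2)))"
proof -
  define d where "d = a^2+2"
  define w where "w = sqrt (real_of_int d)"
  define eps where "eps = of_int (a^2+1) + of_int a * w"
  define eps' where "eps' = of_int (a^2+1) - of_int a * w"
  have w2: "w^2 = of_int (a^2+2)" by (simp add: w_def d_def add_nonneg_nonneg)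
  have d2: "d \<ge> 2" by (simp add: d_def)
  have d4: "d mod 4 = 2 \<or> d mod 4 = 3"
  proof -
    have "d mod 4 = ((a*a) mod 4 + 2) mod 4" by (simp add: d_def power2_eq_square mod_add_left_eq)
    thus ?thesis by (simp add: sq_mod4)
  qed
  have sf': "squarefree d" using sf d_def by simp
  have z: "(of_int a)^2 * w^2 - ((of_int (a^2+1))^2 - 1) = (0::real)"
    unfolding w2 by (simp add: algebra_simps power2_eq_square)
  have "eps^2 - 2 * of_int (a^2+1) * eps + 1 = (of_int a)^2 * w^2 - ((of_int (a^2+1))^2 - 1)"
    unfolding eps_def by (simp add: algebra_simps power2_eq_square)
  with z have e1: "eps^2 - 2 * of_int (a^2+1) * eps + 1 = 0" by simp
  have "eps'^2 - 2 * of_int (a^2+1) * eps' + 1 = (of_int a)^2 * w^2 - ((of_int (a^2+1))^2 - 1)"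
    unfolding eps'_def by (simp add: algebra_simps power2_eq_square)
  with z have e2: "eps'^2 - 2 * of_int (a^2+1) * eps' + 1 = 0" by simp
  have "eps * eps' = 1 - ((of_int a)^2 * w^2 - ((of_int (a^2+1))^2 - 1))"
    unfolding eps_def eps'_def by (simp add: algebra_simps power2_eq_square)
  with z have ee': "eps * eps' = 1" by simp
  hence inv: "inverse eps = eps'" by (rule inverse_unique)
  have "a^2+1 \<ge> 2" using one_le_power[OF a, of 2] by simp
  hence "real_of_int (a^2+1) \<ge> real_of_int 2" by (simp only: of_int_le_iff)
  moreover have "of_int a * w \<ge> (0::real)" using a d2 by (simp add: w_def)
  ultimately have eps1: "eps > 1" unfolding eps_def by linarith
  have F1: "eps \<in> quad_field d" unfolding quad_field_def eps_def w_def
    by (rule CollectI, rule exI[of _ "of_int (a^2+1)"], rule exI[of _ "of_int a"]) (simp add: of_rat_add of_rat_power)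
  have F2: "eps' \<in> quad_field d" unfolding quad_field_def eps'_def w_def
    by (rule CollectI, rule exI[of _ "of_int (a^2+1)"], rule exI[of _ "- of_int a"]) (simp add: of_rat_add of_rat_power of_rat_minus)
  have U: "eps \<in> quad_units d"
    unfolding quad_units_def quad_ring_of_integers_def
    using F1 F2 inv quad_root_alg_int[OF e1] quad_root_alg_int[OF e2] eps1 by auto
  have "\<forall>u\<in>quad_units d. \<exists>n::int. u = eps powi n \<or> u = - (eps powi n)"
  proof
    fix u assume "u \<in> quad_units d"
    hence "nu (a^2+2) u" using units_nu[OF sf' d4 d2] d_def by simp
    from nu_classify[OF a this] show "\<exists>n::int. u = eps powi n \<or> u = - (eps powi n)"
      unfolding eps_def w_def d_def .
  qed
  thus ?thesis using U eps1 unfolding fundamental_unit_def eps_def w_def d_def by blast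
qed



lemma factor_identity:
  fixes S z t :: real
  shows "(t^2 + ((2*S^3-2*S^2+4*S-2) + 2*(S^2-S+1)*z) * t - (S^2+1+S*z)) *
         (t^2 + ((2*S^3-2*S^2+4*S-2) - 2*(S^2-S+1)*z) * t - (S^2+1-S*z))
       = t^4 + (4*S^3 - 4*S^2 + 8*S - 4)*t^3 + (-6*S^2-6)*t^2 + 4*t + 1
         + (z^2 - (S^2+2)) * (-((2*(S^2-S+1))^2) * t^2 + 2*(2*(S^2-S+1))*S*t - S^2)"
  by algebra

lemma roots_real:
  fixes S z r1 r3 \<theta>1 \<theta>3 :: real
  assumes S3: "\<bar>S\<bar> \<ge> 3" and z2: "z^2 = S^2+2" and Sz: "S*z > 0"
  and F1: "r1^4 + (4*S^3 - 4*S^2 + 8*S - 4)*r1^3 + (-6*S^2-6)*r1^2 + 4*r1 + 1 = 0"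
  and F3: "r3^4 + (4*S^3 - 4*S^2 + 8*S - 4)*r3^3 + (-6*S^2-6)*r3^2 + 4*r3 + 1 = 0"
  and t1: "1 \<le> \<theta>1" "\<theta>1 \<le> 2"
  and r1: "r1 = -4*S^3 + 4*S^2 - 8*S + 4 - 3/2 * inverse S - 3/2 * inverse S ^ 2 + \<theta>1 * inverse S ^ 4"
  and t3: "0 \<le> \<theta>3" "\<theta>3 \<le> 1"
  and r3: "r3 = 1/2 * inverse S + 1/2 * inverse S ^ 2 - \<theta>3 * inverse S ^ 4"
  shows "S^2 + 1 + S*z = -(r1*r3)"
proof -
  define a where "a = \<bar>S\<bar>"
  have a3: "a \<ge> 3" using S3 a_def by simp
  have S0: "S \<noteq> 0" using S3 by auto
  have Sa2: "S^2 = a^2" by (simp add: a_def)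
  have Sa4: "S^4 = a^4" by (simp add: a_def power_even_abs)
  have "\<bar>S^3\<bar> = a^3" by (simp add: a_def power_abs)
  hence Sa3: "S^3 \<le> a^3" "-(S^3) \<le> a^3" by argo+
  have Sa1: "S \<le> a" "-S \<le> a" by (simp_all add: a_def)
  have h2: "a^2 \<ge> 3*a" using a3 by (simp add: power2_eq_square)
  have h3: "a^3 \<ge> 3*a^2"
  proof -
    have "a^3 = a * a^2" by (simp add: power3_eq_cube power2_eq_square)
    also have "\<dots> \<ge> 3 * a^2" using a3 by (intro mult_right_mono) auto
    finally show ?thesis .
  qed
  have h4: "a^4 \<ge> 3*a^3"
  proof -
    have "a^4 = a * a^3" by (simp add: power_Suc[symmetric] del: power_Suc)
    also have "\<dots> \<ge> 3 * a^3" using a3 by (intro mult_right_mono) auto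
    finally show ?thesis .
  qed
  define i where "i = inverse S"
  have Si: "S * i = 1" using S0 by (simp add: i_def)
  have ai: "a * \<bar>i\<bar> = 1" using Si by (simp add: a_def flip: abs_mult)
  have "\<bar>i\<bar> * 3 \<le> \<bar>i\<bar> * a" using a3 by (intro mult_left_mono) auto
  hence i3: "\<bar>i\<bar> \<le> 1/3" using ai by (simp add: mult.commute)
  have i33: "\<bar>i\<bar>^3 \<le> (1/3)^3" using i3 by (intro power_mono) auto
  moreover have "\<bar>i^3\<bar> = \<bar>i\<bar>^3" by (simp add: power_abs)
  moreover have "(1/3::real)^3 = 1/27" by (simp add: power3_eq_cube)
  ultimately have i33': "\<bar>i^3\<bar> \<le> 1/27" by argo
  define q where "q = S*z"
  have q2: "q^2 = S^4 + 2*S^2" unfolding q_def using z2 by (simp add: power_mult_distrib algebra_simps power2_eq_square power4_eq_xxxx)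
  have q0: "q > 0" using Sz q_def by simp
  have "(S^2)^2 < q^2" using q2 S0 by (simp add: power2_eq_square power4_eq_xxxx) (auto simp: zero_less_mult_iff)
  hence qlo: "S^2 < q" using q0 power_less_imp_less_base[of "S^2" 2 q] by simp
  have "q^2 < (S^2+1)^2" using q2 by (simp add: power2_eq_square power4_eq_xxxx algebra_simps)
  hence qhi: "q < S^2 + 1" using power_less_imp_less_base[of q 2 "S^2+1"] by simp
  define \<delta> where "\<delta> = q - S^2"
  have d0: "\<delta> > 0" "\<delta> < 1" using qlo qhi \<delta>_def by auto
  define u where "u = 2*S^3-2*S^2+4*S-2"
  define v where "v = 2*(S^2-S+1)"
  define A where "A = u + v*z"
  define B where "B = u - v*z"
  define eps where "eps = S^2+1+S*z"
  define eps' where "eps' = S^2+1-S*z"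
  have fac: "t^4 + (4*S^3 - 4*S^2 + 8*S - 4)*t^3 + (-6*S^2-6)*t^2 + 4*t + 1 =
      (t^2 + A*t - eps) * (t^2 + B*t - eps')" for t
    unfolding A_def B_def u_def v_def eps_def eps'_def
    using factor_identity[of t S z] z2 by simp
  have AB: "A*B = -4*(S^2+1)"
  proof -
    have "A*B = u^2 - v^2 * z^2" unfolding A_def B_def by (simp add: algebra_simps power2_eq_square)
    also have "\<dots> = -4*(S^2+1)" unfolding z2 u_def v_def by algebra
    finally show ?thesis .
  qed
  have ee: "eps * eps' = 1"
  proof -
    have "eps * eps' = (S^2+1)^2 - q^2" unfolding eps_def eps'_def q_def by algebra
    also have "\<dots> = 1" unfolding q2 by algebra
    finally show ?thesis .
  qed
  have eps_lo: "eps \<ge> 2*S^2+1" and eps_hi: "eps \<le> 2*S^2+2" using qlo qhi unfolding eps_def q_def by auto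
  have epsp0: "eps' > 0" using qhi unfolding eps'_def q_def by simp
  define P where "P = A*S"
  have Pdef: "P = 4*S^4 - 4*S^3 + 6*S^2 - 2*S + v*\<delta>"
    unfolding P_def A_def \<delta>_def q_def u_def v_def by algebra
  have v0: "v > 0" unfolding v_def using Sa2 Sa1 h2 a3 by argo
  have "v*\<delta> \<ge> 0" "v*\<delta> \<le> v" using v0 d0 by (simp_all add: mult_left_le)
  moreover have "v \<le> 2*(a^2 + a + 1)" unfolding v_def using Sa2 Sa1 by argo
  ultimately have P_lo: "P \<ge> 4*a^3 + 4*a" and P_hi: "P \<le> 20/3*a^4 + 20/3*a^2"
    unfolding Pdef using Sa4 Sa3 Sa2 Sa1 h2 h3 h4 a3 by argo+
  have P0: "P > 0" using P_lo a3 h2 h3 by argo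
  have "\<bar>A\<bar> * a = P" using P0 by (simp add: P_def a_def flip: abs_mult)
  moreover have "4*a^3 + 4*a = (4*(a^2+1))*a" by (simp add: algebra_simps power2_eq_square power3_eq_cube)
  ultimately have "(4*(a^2+1))*a \<le> \<bar>A\<bar> * a" using P_lo by simp
  hence Ab: "\<bar>A\<bar> \<ge> 4*(a^2+1)" using a3 by (simp add: mult_le_cancel_right_pos)
  have "\<bar>A\<bar> * \<bar>B\<bar> = \<bar>A*B\<bar>" by (simp add: abs_mult)
  also have "\<dots> = \<bar>-(4*(a^2+1))\<bar>" using AB Sa2 by simp
  also have "\<dots> = 4*(a^2+1)" by (simp only: abs_minus_cancel abs_of_nonneg zero_le_power2 add_nonneg_nonneg mult_nonneg_nonneg zero_le_numeral zero_le_one)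
  finally have "\<bar>A\<bar> * \<bar>B\<bar> = 4*(a^2+1)" .
  hence "\<bar>A\<bar> * \<bar>B\<bar> \<le> \<bar>A\<bar> * 1" using Ab by simp
  moreover have "\<bar>A\<bar> > 0" using Ab zero_le_power2[of a] by argo
  ultimately have Bb: "\<bar>B\<bar> \<le> 1" by (simp add: mult_le_cancel_left_pos)
  have BSP: "(B*S) * P = -(4*a^4 + 4*a^2)"
  proof -
    have "(B*S) * P = (A*B) * S^2" unfolding P_def by (simp add: power2_eq_square algebra_simps)
    also have "\<dots> = -(4*S^4 + 4*S^2)" unfolding AB by (simp add: algebra_simps power2_eq_square power4_eq_xxxx)
    finally show ?thesis using Sa2 Sa4 by simp
  qed
  have BS: "B*S \<le> -3/5"
  proof (rule ccontr)
    assume "\<not> B*S \<le> -3/5"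
    hence "(B*S) * P > (-3/5) * P" using P0 by (intro mult_strict_right_mono) auto
    with BSP P_hi P0 show False by argo
  qed
  have Sr1: "S * r1 = -4*S^4 + 4*S^3 - 8*S^2 + 4*S - 3/2 - 3/2 * i + \<theta>1 * i^3"
    unfolding r1 i_def using S0 by (simp add: field_simps power2_eq_square power3_eq_cube power4_eq_xxxx)
  have "\<theta>1 * i^3 \<le> 2/27"
  proof -
    have "\<theta>1 * i^3 \<le> \<theta>1 * \<bar>i^3\<bar>" using t1 by (intro mult_left_mono) auto
    also have "\<dots> \<le> 2 * (1/27)" using t1 i33' by (intro mult_mono) auto
    finally show ?thesis by simp
  qed
  moreover have "- (3/2 * i) \<le> 1/2" using i3 by argo
  moreover have "S^2 \<ge> 0" by simp
  ultimately have "S * r1 \<le> -4*a^4 + 4*a^3 + 4*a" unfolding Sr1 using Sa4 Sa3 Sa1 by argo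
  hence "S * r1 \<le> -2*a" using h2 h3 h4 a3 by argo
  hence "\<bar>S * r1\<bar> \<ge> 2*a" by argo
  hence "a * \<bar>r1\<bar> \<ge> a * 2" by (simp add: a_def abs_mult mult.commute)
  hence r1b: "\<bar>r1\<bar> \<ge> 2" using a3 by simp
  define x where "x = S * r3"
  have xdef: "x = 1/2 + 1/2 * i - \<theta>3 * i^3"
    unfolding x_def r3 i_def using S0 by (simp add: field_simps power2_eq_square power3_eq_cube power4_eq_xxxx)
  have "\<bar>\<theta>3 * i^3\<bar> \<le> 1/27"
  proof -
    have "\<bar>\<theta>3 * i^3\<bar> = \<theta>3 * \<bar>i^3\<bar>" using t3 by (simp add: abs_mult)
    also have "\<dots> \<le> 1 * (1/27)" using t3 i33' by (intro mult_mono) auto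
    finally show ?thesis by simp
  qed
  hence x01: "0 \<le> x" "x \<le> 1" unfolding xdef using i3 by linarith+
  have "a * \<bar>r3\<bar> = \<bar>x\<bar>" by (simp add: x_def a_def abs_mult)
  hence "a * \<bar>r3\<bar> \<le> 1" using x01 by simp
  moreover have "3 * \<bar>r3\<bar> \<le> a * \<bar>r3\<bar>" using a3 by (intro mult_right_mono) auto
  ultimately have r3b: "\<bar>r3\<bar> < 1" by linarith
  have neq: "r1 \<noteq> r3" using r1b r3b by auto
  have Q2r1: "r1^2 + B*r1 - eps' \<noteq> 0"
  proof -
    have "\<bar>B*r1\<bar> \<le> \<bar>r1\<bar>" using Bb by (simp add: abs_mult mult_left_le_one_le)
    moreover have "r1^2 \<ge> 2 * \<bar>r1\<bar>" using r1b
      by (metis abs_ge_zero mult_right_mono power2_abs power2_eq_square)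
    moreover have "eps' < 1"
    proof -
      have "eps \<ge> 19" using eps_lo Sa2 h2 a3 by argo
      hence "eps' * 1 < eps' * eps" using epsp0 by (intro mult_strict_left_mono) auto
      thus ?thesis using ee by (simp add: mult.commute)
    qed
    ultimately show ?thesis using r1b by argo
  qed
  have Q2r3: "r3^2 + B*r3 - eps' \<noteq> 0"
  proof -
    have e1: "S^2 * (r3^2 + B*r3 - eps') = x^2 + (B*S)*x - eps' * S^2"
      by (simp add: x_def power2_eq_square algebra_simps)
    have "x^2 \<le> x" using x01 by (simp add: power2_eq_square mult_left_le_one_le)
    moreover have "(B*S)*x \<le> (-3/5)*x" using BS x01 by (intro mult_right_mono) auto
    moreover have "eps' * S^2 \<ge> 17/38"
    proof -
      have "eps' * eps \<le> eps' * (2*S^2+2)" using eps_hi epsp0 by (intro mult_left_mono) auto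
      hence "1 \<le> 2 * (eps' * S^2) + 2*eps'" using ee by (simp add: algebra_simps)
      moreover have "eps' * eps \<ge> eps' * 19" using eps_lo epsp0 Sa2 h2 a3 by (intro mult_left_mono) auto
      hence "19 * eps' \<le> 1" using ee by (simp add: mult.commute)
      ultimately show ?thesis by argo
    qed
    ultimately have "S^2 * (r3^2 + B*r3 - eps') < 0" unfolding e1 using x01 by argo
    thus ?thesis by auto
  qed
  have Q1r1: "r1^2 + A*r1 - eps = 0" using F1 fac[of r1] Q2r1 by simp
  have Q1r3: "r3^2 + A*r3 - eps = 0" using F3 fac[of r3] Q2r3 by simp
  have "(r1 - r3) * (r1 + r3 + A) = 0" using Q1r1 Q1r3 by (simp add: algebra_simps power2_eq_square)
  hence "A = -(r1 + r3)" using neq by simp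
  with Q1r1 have "eps = -(r1*r3)" by (simp add: power2_eq_square algebra_simps)
  thus ?thesis unfolding eps_def .
qed


theorem mainTheorem7:
  fixes s :: int
  assumes "s \<noteq> 0" and "squarefree (s^2 + 2)"
  defines "eps \<equiv> real_of_int (s^2 + 1) + real_of_int \<bar>s\<bar> * sqrt (real_of_int (s^2 + 2))"
  shows "fundamental_unit (s^2 + 2) eps \<and>
    ((\<bar>s\<bar> \<ge> 3 \<and> (\<exists>k::int. 3*s^2 - 4*s + 4 = k^2)) \<longrightarrow>
      (\<forall>r1 r3 :: real. F_poly s r1 = 0 \<and> F_poly s r3 = 0 \<and>
         (\<exists>\<theta>1. 1 \<le> \<theta>1 \<and> \<theta>1 \<le> 2 \<and>
            r1 = -4*s^3 + 4*s^2 - 8*s + 4 - 3/2 * inverse (real_of_int s) - 3/2 * inverse (real_of_int s)^2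
                 + \<theta>1 * inverse (real_of_int s)^4) \<and>
         (\<exists>\<theta>3. 0 \<le> \<theta>3 \<and> \<theta>3 \<le> 1 \<and>
            r3 = 1/2 * inverse (real_of_int s) + 1/2 * inverse (real_of_int s)^2
                 - \<theta>3 * inverse (real_of_int s)^4)
       \<longrightarrow> eps = - (r1 * r3)))"
proof (intro conjI impI allI)
  have a1: "\<bar>s\<bar> \<ge> 1" using assms(1) by linarith
  have sf': "squarefree (\<bar>s\<bar>^2+2)" using assms(2) by simp
  show "fundamental_unit (s^2 + 2) eps"
    using fund_unit_a[OF a1 sf'] unfolding eps_def by simp
next
  fix r1 r3 :: real
  assume h: "\<bar>s\<bar> \<ge> 3 \<and> (\<exists>k::int. 3*s^2 - 4*s + 4 = k^2)"
  assume H: "F_poly s r1 = 0 \<and> F_poly s r3 = 0 \<and>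
         (\<exists>\<theta>1. 1 \<le> \<theta>1 \<and> \<theta>1 \<le> 2 \<and>
            r1 = -4*s^3 + 4*s^2 - 8*s + 4 - 3/2 * inverse (real_of_int s) - 3/2 * inverse (real_of_int s)^2
                 + \<theta>1 * inverse (real_of_int s)^4) \<and>
         (\<exists>\<theta>3. 0 \<le> \<theta>3 \<and> \<theta>3 \<le> 1 \<and>
            r3 = 1/2 * inverse (real_of_int s) + 1/2 * inverse (real_of_int s)^2
                 - \<theta>3 * inverse (real_of_int s)^4)"
  then obtain \<theta>1 \<theta>3 where F1: "F_poly s r1 = 0" and F3: "F_poly s r3 = 0"
    and t1: "1 \<le> \<theta>1" "\<theta>1 \<le> 2"
    and r1: "r1 = -4*s^3 + 4*s^2 - 8*s + 4 - 3/2 * inverse (real_of_int s) - 3/2 * inverse (real_of_int s)^2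
                 + \<theta>1 * inverse (real_of_int s)^4"
    and t3: "0 \<le> \<theta>3" "\<theta>3 \<le> 1"
    and r3: "r3 = 1/2 * inverse (real_of_int s) + 1/2 * inverse (real_of_int s)^2
                 - \<theta>3 * inverse (real_of_int s)^4" by blast
  define S where "S = real_of_int s"
  define w where "w = sqrt (real_of_int (s^2+2))"
  define z where "z = sgn S * w"
  have S0: "S \<noteq> 0" using assms(1) by (simp add: S_def)
  have S3: "\<bar>S\<bar> \<ge> 3" using h by (simp add: S_def) linarith
  have w2: "w^2 = S^2 + 2" by (simp add: w_def S_def add_nonneg_nonneg)
  have w0: "w > 0" by (simp add: w_def add_nonneg_pos)
  have "(sgn S)^2 = 1" using S0 by (simp add: sgn_if)
  hence z2: "z^2 = S^2+2" by (simp add: z_def power_mult_distrib w2)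
  have Sz': "S * z = \<bar>S\<bar> * w" by (simp add: z_def abs_sgn mult.assoc[symmetric] sgn_mult_abs)
  have Sz: "S * z > 0" using Sz' S0 w0 by simp
  have main: "S^2 + 1 + S*z = -(r1*r3)"
    by (rule roots_real[OF S3 z2 Sz _ _ t1 _ t3])
       (use F1 F3 r1 r3 in \<open>simp_all add: F_poly_def S_def\<close>)
  show "eps = - (r1 * r3)" using main unfolding eps_def Sz' by (simp add: S_def w_def)
qed

end
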